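(* Let $A=\mathbb{C}[x,y,z]$, let $a\in A\setminus\mathbb{C}$ and equip $A$ with the exact Poisson bracket $\{x,y\}=a_z$, $\{y,z\}=a_x$, $\{z,x\}=a_y$. Then the Poisson prime ideals of $A$ are exactly: $0$; the residually null Poisson prime ideals; and the height one prime ideals $pA$ where $p$ is an irreducible factor in $A$ of $a-\mu$ for some $\mu\in\mathbb{C}$.
   Context: Subscripts denote partial derivatives. A Poisson prime ideal is a prime ideal $P$ with $\{b,P\}\subseteq P$ for all $b\in A$. A Poisson ideal $I$ is residually null if the induced bracket on $A/I$ is zero (equivalently $a_x,a_y,a_z\in I$). *)

theory Defs
  imports "HOL-Computational_Algebra.Computational_Algebra"
begin

text \<open>The polynomial ring A = C[x,y,z] is modelled as iterated univariate
polynomials C[x][y][z]: an element of type complex poly poly poly is a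
polynomial in z whose coefficients are polynomials in y whose coefficients
are polynomials in x.\<close>

type_synonym A3 = "complex poly poly poly"

definition cst :: "complex \<Rightarrow> A3" where
  "cst c = [:[:[:c:]:]:]"

definition varX :: A3 where "varX = [:[:[:0, 1:]:]:]"
definition varY :: A3 where "varY = [:[:0, 1:]:]"
definition varZ :: A3 where "varZ = [:0, 1:]"

definition dX :: "A3 \<Rightarrow> A3" where "dX f = map_poly (map_poly pderiv) f"
definition dY :: "A3 \<Rightarrow> A3" where "dY f = map_poly pderiv f"
definition dZ :: "A3 \<Rightarrow> A3" where "dZ f = pderiv f"

text \<open>The exact Poisson bracket with potential a:
  {x,y} = a_z, {y,z} = a_x, {z,x} = a_y, extended as a biderivation.\<close>
definition pbr :: "A3 \<Rightarrow> A3 \<Rightarrow> A3 \<Rightarrow> A3" where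
  "pbr a f g =
     (dX f * dY g - dY f * dX g) * dZ a
   + (dY f * dZ g - dZ f * dY g) * dX a
   + (dZ f * dX g - dX f * dZ g) * dY a"

definition is_ideal :: "A3 set \<Rightarrow> bool" where
  "is_ideal I \<longleftrightarrow> 0 \<in> I \<and> (\<forall>u\<in>I. \<forall>v\<in>I. u + v \<in> I) \<and> (\<forall>r. \<forall>u\<in>I. r * u \<in> I)"

definition is_prime_ideal :: "A3 set \<Rightarrow> bool" where
  "is_prime_ideal P \<longleftrightarrow> is_ideal P \<and> P \<noteq> UNIV \<and> (\<forall>u v. u * v \<in> P \<longrightarrow> u \<in> P \<or> v \<in> P)"

definition poisson_ideal :: "A3 \<Rightarrow> A3 set \<Rightarrow> bool" where
  "poisson_ideal a I \<longleftrightarrow> is_ideal I \<and> (\<forall>b. \<forall>u\<in>I. pbr a b u \<in> I)"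

definition poisson_prime :: "A3 \<Rightarrow> A3 set \<Rightarrow> bool" where
  "poisson_prime a P \<longleftrightarrow> is_prime_ideal P \<and> (\<forall>b. \<forall>u\<in>P. pbr a b u \<in> P)"

definition residually_null :: "A3 \<Rightarrow> A3 set \<Rightarrow> bool" where
  "residually_null a I \<longleftrightarrow> poisson_ideal a I \<and> (\<forall>f g. pbr a f g \<in> I)"

definition principal :: "A3 \<Rightarrow> A3 set" where
  "principal p = {p * r | r. True}"

end

theory Submission
  imports Defs "HOL-Computational_Algebra.Field_as_Ring"
begin


definition is_der :: "('a::comm_ring_1 \<Rightarrow> 'a) \<Rightarrow> bool" where
  "is_der D \<longleftrightarrow> (\<forall>x y. D (x+y) = D x + D y) \<and> (\<forall>x y. D (x*y) = D x * y + x * D y)"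

lemma is_der_add: "is_der D \<Longrightarrow> D (x+y) = D x + D y" by (simp add: is_der_def)
lemma is_der_mult: "is_der D \<Longrightarrow> D (x*y) = D x * y + x * D y" by (simp add: is_der_def)
lemma is_der_0: "is_der D \<Longrightarrow> D 0 = 0"
  using is_der_add[of D 0 0] by simp
lemma is_der_uminus: "is_der D \<Longrightarrow> D (-x) = - D x"
  using is_der_add[of D x "-x"] is_der_0[of D] by (simp add: eq_neg_iff_add_eq_0 add.commute)
lemma is_der_diff: "is_der D \<Longrightarrow> D (x-y) = D x - D y"
  using is_der_add[of D x "-y"] is_der_uminus[of D y] by simp

lemma map_poly_der_add: "is_der D \<Longrightarrow> map_poly D (p+q) = map_poly D p + map_poly D q"
  by (rule poly_eqI) (simp add: coeff_map_poly is_der_0 is_der_add)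
lemma map_poly_der_diff: "is_der D \<Longrightarrow> map_poly D (p-q) = map_poly D p - map_poly D q"
  by (rule poly_eqI) (simp add: coeff_map_poly is_der_0 is_der_diff)
lemma map_poly_der_const: "is_der D \<Longrightarrow> map_poly D [:c:] = [:D c:]"
  by (rule poly_eqI) (simp add: coeff_map_poly is_der_0 coeff_pCons split: nat.splits)
lemma map_poly_der_smult: "is_der D \<Longrightarrow> map_poly D (smult c p) = smult (D c) p + smult c (map_poly D p)"
  by (rule poly_eqI) (simp add: coeff_map_poly is_der_0 is_der_mult)
lemma map_poly_der_pCons0: "is_der D \<Longrightarrow> map_poly D (pCons 0 p) = pCons 0 (map_poly D p)"
  by (simp add: map_poly_pCons is_der_0)

lemma map_poly_der_mult:
  assumes "is_der D"
  shows "map_poly D (p*q) = map_poly D p * q + p * map_poly D q"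
proof (induction p)
  case 0 then show ?case by simp
next
  case (pCons a p)
  have "map_poly D (pCons a p * q) = map_poly D (smult a q + pCons 0 (p*q))" by simp
  also have "\<dots> = smult (D a) q + smult a (map_poly D q) + pCons 0 (map_poly D p * q + p * map_poly D q)"
    using assms pCons.IH by (simp add: map_poly_der_add map_poly_der_smult map_poly_der_pCons0)
  also have "\<dots> = map_poly D (pCons a p) * q + pCons a p * map_poly D q"
    using assms by (simp add: map_poly_pCons is_der_0 algebra_simps)
  finally show ?case .
qed

lemma is_der_map_poly: "is_der D \<Longrightarrow> is_der (map_poly D)"
  unfolding is_der_def[of "map_poly D"] by (simp add: map_poly_der_add map_poly_der_mult)

lemma is_der_pderiv: "is_der (pderiv :: 'a::idom poly \<Rightarrow> _)"
  by (simp add: is_der_def pderiv_add pderiv_mult)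

lemma smult_sum_left: "(\<Sum>i\<in>S. smult (f i) p) = smult (sum f S) p"
  by (simp add: smult_sum)

lemma poly_lin_dep:
  fixes q :: "'i \<Rightarrow> 'a::idom poly"
  assumes "finite I" "card I > n" "\<forall>i\<in>I. q i = 0 \<or> degree (q i) < n"
  shows "\<exists>c. (\<exists>i\<in>I. c i \<noteq> 0) \<and> (\<Sum>i\<in>I. smult (c i) (q i)) = 0"
  using assms
proof (induction n arbitrary: I q)
  case 0
  then obtain i where i: "i \<in> I" by (metis card.empty ex_in_conv less_irrefl)
  then have "q i = 0" using 0 by auto
  then show ?case using i 0(1)
    by (intro exI[of _ "\<lambda>k. if k = i then 1 else 0"]) (auto intro!: sum.neutral)
next
  case (Suc n)
  show ?case
  proof (cases "\<forall>i\<in>I. coeff (q i) n = 0")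
    case True
    have "\<forall>i\<in>I. q i = 0 \<or> degree (q i) < n"
    proof
      fix i assume i: "i \<in> I"
      show "q i = 0 \<or> degree (q i) < n"
      proof (cases "q i = 0")
        case False
        then have "degree (q i) < Suc n" using Suc.prems i by auto
        moreover have "degree (q i) \<noteq> n" using True i False by (metis leading_coeff_0_iff)
        ultimately show ?thesis by simp
      qed simp
    qed
    then show ?thesis using Suc.IH[of I q] Suc.prems by auto
  next
    case False
    then obtain j where j: "j \<in> I" "coeff (q j) n \<noteq> 0" by auto
    define l where "l = coeff (q j) n"
    define q' where "q' i = smult l (q i) - smult (coeff (q i) n) (q j)" for i
    have "\<forall>i\<in>I-{j}. q' i = 0 \<or> degree (q' i) < n"
    proof
      fix i assume i: "i \<in> I - {j}"
      have d1: "degree (q i) \<le> n" using Suc.prems i by (cases "q i = 0") auto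
      have d2: "degree (q j) \<le> n" using Suc.prems j by (cases "q j = 0") auto
      have "degree (q' i) \<le> n" unfolding q'_def
        by (intro degree_diff_le order.trans[OF degree_smult_le] d1 d2)
      moreover have "coeff (q' i) n = 0" by (simp add: q'_def l_def)
      ultimately show "q' i = 0 \<or> degree (q' i) < n"
        by (metis le_neq_implies_less leading_coeff_0_iff)
    qed
    moreover have "card (I - {j}) > n" using Suc.prems j by (simp add: card_Diff_singleton)
    moreover have "finite (I - {j})" using Suc.prems by simp
    ultimately obtain c' where c': "\<exists>i\<in>I-{j}. c' i \<noteq> 0" "(\<Sum>i\<in>I-{j}. smult (c' i) (q' i)) = 0"
      using Suc.IH[of "I - {j}" q'] by blast
    define c where "c i = (if i = j then - (\<Sum>k\<in>I-{j}. c' k * coeff (q k) n) else c' i * l)" for i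
    have "(\<Sum>i\<in>I. smult (c i) (q i)) = smult (c j) (q j) + (\<Sum>i\<in>I-{j}. smult (c i) (q i))"
      using Suc.prems(1) j by (simp add: sum.remove)
    also have "(\<Sum>i\<in>I-{j}. smult (c i) (q i)) = (\<Sum>i\<in>I-{j}. smult (c' i * l) (q i))"
      by (rule sum.cong) (auto simp: c_def)
    also have "smult (c j) (q j) = - (\<Sum>k\<in>I-{j}. smult (c' k * coeff (q k) n) (q j))"
      by (simp add: c_def smult_sum_left)
    also have "- (\<Sum>k\<in>I-{j}. smult (c' k * coeff (q k) n) (q j)) + (\<Sum>i\<in>I-{j}. smult (c' i * l) (q i))
        = (\<Sum>i\<in>I-{j}. smult (c' i) (q' i))"
      by (simp add: q'_def sum_subtractf[symmetric] algebra_simps smult_diff_right sum_negf[symmetric]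
          flip: sum.distrib)
    also have "\<dots> = 0" by (rule c'(2))
    finally have "(\<Sum>i\<in>I. smult (c i) (q i)) = 0" .
    moreover from c'(1) obtain i where "i \<in> I - {j}" "c' i \<noteq> 0" by blast
    then have "c i \<noteq> 0" using j by (simp add: c_def l_def)
    ultimately show ?thesis using \<open>i \<in> I - {j}\<close> by blast
  qed
qed

lemma pcompose_x_power: "pcompose ([:0,1:]^j) g = g^j"
  by (induction j) (simp_all add: pcompose_mult pcompose_1 pcompose_pCons)

lemma elim_exists:
  fixes p g :: "'a::idom poly"
  assumes "degree p > 0"
  shows "\<exists>F. F \<noteq> 0 \<and> p dvd pcompose F g"
proof -
  have p0: "p \<noteq> 0" using assms by auto
  define r where "r j = pseudo_mod (g^j) p" for j
  have "\<forall>j. \<exists>a Q. a \<noteq> 0 \<and> smult a (g^j) = p*Q + r j" unfolding r_def using pseudo_mod(1)[OF p0] by blast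
  then obtain a Q where aQ: "\<And>j. a j \<noteq> 0" "\<And>j. smult (a j) (g^j) = p * Q j + r j" by metis
  have "\<forall>j\<in>{..degree p}. r j = 0 \<or> degree (r j) < degree p"
    unfolding r_def using pseudo_mod(2)[OF p0] by blast
  then obtain c where c: "\<exists>j\<in>{..degree p}. c j \<noteq> 0" "(\<Sum>j\<in>{..degree p}. smult (c j) (r j)) = 0"
    using poly_lin_dep[of "{..degree p}" "degree p" r] by auto
  define F where "F = (\<Sum>j\<in>{..degree p}. monom (c j * a j) j)"
  have "pcompose F g = (\<Sum>j\<in>{..degree p}. smult (c j) (smult (a j) (g^j)))"
    unfolding F_def pcompose_sum
    by (rule sum.cong) (simp_all add: monom_altdef pcompose_smult pcompose_x_power)
  also have "\<dots> = (\<Sum>j\<in>{..degree p}. p * smult (c j) (Q j) + smult (c j) (r j))"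
    by (simp add: aQ(2) smult_add_right)
  also have "\<dots> = p * (\<Sum>j\<in>{..degree p}. smult (c j) (Q j))"
    by (simp add: sum.distrib c(2) sum_distrib_left)
  finally have "p dvd pcompose F g" by simp
  moreover obtain j0 where j0: "j0 \<in> {..degree p}" "c j0 \<noteq> 0" using c(1) by blast
  have "coeff F j0 = c j0 * a j0"
    unfolding F_def coeff_sum using j0(1) by (simp add: coeff_monom)
  then have "F \<noteq> 0" using j0 aQ(1)[of j0] by auto
  ultimately show ?thesis by blast
qed



lemma map_poly_hom_add:
  fixes emb :: "'a::comm_ring_1 \<Rightarrow> 'b::comm_ring_1"
  assumes "\<And>x y. emb (x+y) = emb x + emb y"
  shows "map_poly emb (A+B) = map_poly emb A + map_poly emb B"
proof -
  have e0: "emb 0 = 0" using assms[of 0 0] by (metis add_cancel_right_right)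
  show ?thesis by (rule poly_eqI) (simp add: coeff_map_poly e0 assms)
qed

lemma map_poly_hom_mult:
  fixes emb :: "'a::comm_ring_1 \<Rightarrow> 'b::comm_ring_1"
  assumes add: "\<And>x y. emb (x+y) = emb x + emb y" and mult: "\<And>x y. emb (x*y) = emb x * emb y"
  shows "map_poly emb (A*B) = map_poly emb A * map_poly emb B"
proof (induction A)
  case 0 then show ?case by simp
next
  case (pCons a A)
  have e0: "emb 0 = 0" using add[of 0 0] by (metis add_cancel_right_right)
  have "map_poly emb (pCons a A * B) = map_poly emb (smult a B + pCons 0 (A*B))" by simp
  also have "\<dots> = smult (emb a) (map_poly emb B) + pCons 0 (map_poly emb A * map_poly emb B)"
    by (simp add: map_poly_hom_add[OF add] map_poly_smult e0 mult map_poly_pCons pCons.IH)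
  also have "\<dots> = map_poly emb (pCons a A) * map_poly emb B"
    by (simp add: map_poly_pCons e0)
  finally show ?case .
qed

lemma chain_der:
  assumes "is_der D"
  shows "map_poly D (pcompose F g) = pcompose (map_poly D F) g + pcompose (pderiv F) g * map_poly D g"
proof (induction F)
  case 0 show ?case using assms by (simp add: is_der_0)
next
  case (pCons a F)
  have "map_poly D (pcompose (pCons a F) g) = map_poly D ([:a:] + g * pcompose F g)"
    by (simp add: pcompose_pCons)
  also have "\<dots> = [:D a:] + map_poly D g * pcompose F g
      + g * (pcompose (map_poly D F) g + pcompose (pderiv F) g * map_poly D g)"
    using assms pCons.IH by (simp add: map_poly_der_add map_poly_der_mult map_poly_der_const)
  also have "\<dots> = pcompose (map_poly D (pCons a F)) g + pcompose (pderiv (pCons a F)) g * map_poly D g"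
    using assms by (simp add: map_poly_pCons is_der_0 pcompose_pCons pderiv_pCons pcompose_add algebra_simps)
  finally show ?case .
qed

lemma delta_mult:
  assumes "is_der D"
  shows "map_poly D (p*h) * pderiv p - pderiv (p*h) * map_poly D p
       = p * (map_poly D h * pderiv p - pderiv h * map_poly D p)"
  using assms by (simp add: map_poly_der_mult pderiv_mult algebra_simps)

lemma factor_lemma:
  fixes p g :: "'s::idom poly" and emb :: "complex \<Rightarrow> 's"
  assumes add: "\<And>x y. emb (x+y) = emb x + emb y" and mult: "\<And>x y. emb (x*y) = emb x * emb y"
    and one: "emb 1 = 1" and inj: "\<And>x. emb x = 0 \<Longrightarrow> x = 0"
    and pr: "\<And>u v. p dvd u * v \<Longrightarrow> p dvd u \<or> p dvd v" and dp: "degree p > 0"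
  shows "H \<noteq> 0 \<Longrightarrow> p dvd pcompose (map_poly emb H) g \<Longrightarrow> \<exists>\<mu>. p dvd g - [:emb \<mu>:]"
proof (induction "degree H" arbitrary: H rule: less_induct)
  case less
  have e0: "emb 0 = 0" using add[of 0 0] by (metis add_cancel_right_right)
  show ?case
  proof (cases "degree H = 0")
    case True
    then obtain k where H: "H = [:k:]" by (metis degree_eq_zeroE)
    then have "k \<noteq> 0" using less.prems by simp
    then have "emb k \<noteq> 0" using inj by blast
    have "map_poly emb H = [:emb k:]" by (simp add: H e0 map_poly_pCons)
    then have "p dvd [:emb k:]" using less.prems by simp
    then have "degree p \<le> 0" using \<open>emb k \<noteq> 0\<close> by (metis dvd_imp_degree_le degree_pCons_0 pCons_eq_0_iff)
    then show ?thesis using dp by simp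
  next
    case False
    then have "\<not> constant (poly H)" by (simp add: constant_degree)
    then obtain \<mu> where "poly H \<mu> = 0" using fundamental_theorem_of_algebra by blast
    then obtain H' where H': "H = [:-\<mu>, 1:] * H'" by (metis poly_eq_0_iff_dvd dvdE)
    have H'0: "H' \<noteq> 0" using less.prems H' by auto
    have dH: "degree H = Suc (degree H')" unfolding H' using H'0
      by (subst degree_mult_eq) auto
    have em: "emb (-\<mu>) = - emb \<mu>" using add[of \<mu> "-\<mu>"] e0 by (simp add: eq_neg_iff_add_eq_0 add.commute)
    have m1: "map_poly emb [:-\<mu>, 1:] = [:- emb \<mu>, 1:]" by (simp add: map_poly_pCons e0 one em)
    have "map_poly emb H = map_poly emb [:-\<mu>, 1:] * map_poly emb H'"
      unfolding H' by (rule map_poly_hom_mult[OF add mult])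
    then have "map_poly emb H = [:- emb \<mu>, 1:] * map_poly emb H'" using m1 by simp
    then have "pcompose (map_poly emb H) g = pcompose [:- emb \<mu>, 1:] g * pcompose (map_poly emb H') g"
      by (simp only: pcompose_mult)
    moreover have "pcompose [:- emb \<mu>, 1:] g = g - [:emb \<mu>:]"
      by (simp add: pcompose_pCons algebra_simps)
    ultimately have "pcompose (map_poly emb H) g = (g - [:emb \<mu>:]) * pcompose (map_poly emb H') g"
      by simp
    then have "p dvd g - [:emb \<mu>:] \<or> p dvd pcompose (map_poly emb H') g"
      using less.prems pr by metis
    then show ?thesis using less.hyps[of H'] H'0 dH by auto
  qed
qed



lemma degree_map_poly_der_le: "f 0 = 0 \<Longrightarrow> degree (map_poly f F) \<le> degree F"
  by (rule degree_le) (simp add: coeff_map_poly coeff_eq_0)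

lemma const_lemma:
  fixes p g :: "'s::{idom,ring_char_0} poly" and Ds :: "('s \<Rightarrow> 's) list"
    and m :: "'s \<Rightarrow> nat" and emb :: "complex \<Rightarrow> 's"
  assumes der: "\<And>D. D \<in> set Ds \<Longrightarrow> is_der D"
    and meas: "\<And>c. (\<forall>D\<in>set Ds. D c = 0) \<or> (\<exists>D\<in>set Ds. D c \<noteq> 0 \<and> m (D c) < m c)"
    and ker: "\<And>c. \<forall>D\<in>set Ds. D c = 0 \<Longrightarrow> c \<in> range emb"
    and add: "\<And>x y. emb (x+y) = emb x + emb y" and mult: "\<And>x y. emb (x*y) = emb x * emb y"
    and one: "emb 1 = 1" and inj: "\<And>x. emb x = 0 \<Longrightarrow> x = 0"
    and pr: "\<And>u v. p dvd u * v \<Longrightarrow> p dvd u \<or> p dvd v" and dp: "degree p > 0"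
    and hyp: "\<And>D. D \<in> set Ds \<Longrightarrow> p dvd (map_poly D g * pderiv p - pderiv g * map_poly D p)"
  shows "\<exists>\<mu>. p dvd g - [:emb \<mu>:]"
proof -
  define good where "good F \<longleftrightarrow> F \<noteq> 0 \<and> p dvd pcompose F g" for F
  have ex: "\<exists>F. good F" using elim_exists[OF dp] good_def by blast
  define n where "n = (LEAST k. \<exists>F. good F \<and> degree F = k)"
  have "\<exists>k F. good F \<and> degree F = k" using ex by blast
  then have exn: "\<exists>F. good F \<and> degree F = n" unfolding n_def by (rule LeastI_ex)
  have nmin: "n \<le> degree F" if "good F" for F unfolding n_def by (rule Least_le) (use that in blast)
  define t where "t = (LEAST t. \<exists>F. good F \<and> degree F = n \<and> m (lead_coeff F) = t)"
  have "\<exists>t F. good F \<and> degree F = n \<and> m (lead_coeff F) = t" using exn by blast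
  then have "\<exists>F. good F \<and> degree F = n \<and> m (lead_coeff F) = t"
    unfolding t_def by (rule LeastI_ex)
  then obtain F0 where F0: "good F0" "degree F0 = n" "m (lead_coeff F0) = t" by blast
  have tmin: "t \<le> m (lead_coeff F)" if "good F" "degree F = n" for F
    unfolding t_def by (rule Least_le) (use that in blast)
  have pp: "\<not> p dvd pderiv p"
  proof
    assume a: "p dvd pderiv p"
    have "pderiv p \<noteq> 0" using dp by (simp add: pderiv_eq_0_iff)
    then have "degree p \<le> degree (pderiv p)" using a dvd_imp_degree_le by blast
    then show False using dp by (simp add: degree_pderiv)
  qed
  have step: "p dvd pcompose (map_poly D F) g" if D: "D \<in> set Ds" and F: "good F" for D F
  proof -
    have iD: "is_der D" using der D .
    from F obtain h where h: "pcompose F g = p * h" unfolding good_def by (auto elim: dvdE)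
    let ?X = "pcompose (map_poly D F) g" and ?Y = "pcompose (pderiv F) g"
    have e1: "map_poly D (p*h) = ?X + ?Y * map_poly D g" using chain_der[OF iD, of F g] h by simp
    have e2: "pderiv (p*h) = ?Y * pderiv g" using pderiv_pcompose[of F g] h by simp
    have eq: "map_poly D (p*h) * pderiv p - pderiv (p*h) * map_poly D p
        = ?X * pderiv p + ?Y * (map_poly D g * pderiv p - pderiv g * map_poly D p)"
      unfolding e1 e2 by (simp add: algebra_simps)
    have d1: "p dvd map_poly D (p*h) * pderiv p - pderiv (p*h) * map_poly D p"
      by (simp only: delta_mult[OF iD] dvd_triv_left)
    have "p dvd ?Y * (map_poly D g * pderiv p - pderiv g * map_poly D p)"
      using hyp[OF D] by (rule dvd_mult)
    have "p dvd ?X * pderiv p + ?Y * (map_poly D g * pderiv p - pderiv g * map_poly D p)"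
      using d1 unfolding eq .
    then have "p dvd ?X * pderiv p"
      using dvd_add_left_iff[OF \<open>p dvd ?Y * (map_poly D g * pderiv p - pderiv g * map_poly D p)\<close>] by simp
    then show ?thesis using pr pp by blast
  qed
  have lead0: "\<forall>D\<in>set Ds. D (lead_coeff F0) = 0"
  proof (rule ccontr)
    assume "\<not> (\<forall>D\<in>set Ds. D (lead_coeff F0) = 0)"
    then obtain D where D: "D \<in> set Ds" "D (lead_coeff F0) \<noteq> 0" "m (D (lead_coeff F0)) < m (lead_coeff F0)"
      using meas[of "lead_coeff F0"] by blast
    have iD: "is_der D" using der D(1) .
    let ?G = "map_poly D F0"
    have cG: "coeff ?G n = D (lead_coeff F0)" using F0(2) by (simp add: coeff_map_poly is_der_0[OF iD])
    have "degree ?G \<le> n" using degree_map_poly_der_le[of D F0] is_der_0[OF iD] F0(2) by simp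
    moreover have "n \<le> degree ?G" using cG D(2) by (intro le_degree) simp
    ultimately have dG: "degree ?G = n" by (rule antisym)
    have "?G \<noteq> 0" using cG D(2) by auto
    then have "good ?G" using step[OF D(1) F0(1)] good_def by simp
    then have "t \<le> m (lead_coeff ?G)" using tmin dG by simp
    moreover have "lead_coeff ?G = D (lead_coeff F0)" using cG dG by simp
    ultimately have "t \<le> m (D (lead_coeff F0))" by simp
    then show False using D(3) F0(3) by linarith
  qed
  have all0: "\<forall>D\<in>set Ds. map_poly D F0 = 0"
  proof (rule ccontr)
    assume "\<not> (\<forall>D\<in>set Ds. map_poly D F0 = 0)"
    then obtain D where D: "D \<in> set Ds" "map_poly D F0 \<noteq> 0" by blast
    have iD: "is_der D" using der D(1) .
    let ?G = "map_poly D F0"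
    have cG: "coeff ?G n = 0" using F0(2) lead0 D(1) by (simp add: coeff_map_poly is_der_0[OF iD])
    have "degree ?G \<le> n" using degree_map_poly_der_le[of D F0] is_der_0[OF iD] F0(2) by simp
    moreover have "degree ?G \<noteq> n"
    proof
      assume "degree ?G = n"
      then have "lead_coeff ?G = 0" using cG by simp
      then show False using D(2) by simp
    qed
    ultimately have "degree ?G < n" by simp
    moreover have "good ?G" using step[OF D(1) F0(1)] good_def D(2) by simp
    ultimately show False using nmin[of ?G] by linarith
  qed
  have rng: "coeff F0 i \<in> range emb" for i
  proof -
    have "\<forall>D\<in>set Ds. D (coeff F0 i) = 0"
    proof
      fix D assume D: "D \<in> set Ds"
      have "coeff (map_poly D F0) i = 0" using all0 D by simp
      then show "D (coeff F0 i) = 0" using is_der_0[OF der[OF D]] by (simp add: coeff_map_poly)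
    qed
    then show ?thesis by (rule ker)
  qed
  have e0: "emb 0 = 0" using add[of 0 0] by (metis add_cancel_right_right)
  have i0: "inv emb 0 = 0"
  proof -
    have "emb (inv emb 0) = 0" using e0 by (metis f_inv_into_f rangeI)
    then show ?thesis by (rule inj)
  qed
  define H where "H = map_poly (inv emb) F0"
  have HF: "map_poly emb H = F0"
    by (rule poly_eqI) (simp add: H_def coeff_map_poly e0 i0 f_inv_into_f[OF rng])
  have F0': "F0 \<noteq> 0" "p dvd pcompose F0 g" using F0(1) unfolding good_def by auto
  have H0: "H \<noteq> 0" using HF F0'(1) by auto
  have Hd: "p dvd pcompose (map_poly emb H) g" using F0'(2) by (simp only: HF)
  show ?thesis
    apply (rule factor_lemma[where emb=emb and p=p and H=H and g=g])
    apply (rule add) apply (rule mult) apply (rule one) apply (erule inj) apply (erule pr)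
    apply (rule dp) apply (rule H0) apply (rule Hd) done
qed



lemma der_dX: "is_der dX"
  unfolding dX_def[abs_def] by (intro is_der_map_poly is_der_pderiv)
lemma der_dY: "is_der dY"
  unfolding dY_def[abs_def] by (intro is_der_map_poly is_der_pderiv)
lemma der_dZ: "is_der dZ"
  unfolding dZ_def[abs_def] by (rule is_der_pderiv)

lemmas dX_add = is_der_add[OF der_dX] and dY_add = is_der_add[OF der_dY] and dZ_add = is_der_add[OF der_dZ]
lemmas dX_mult = is_der_mult[OF der_dX] and dY_mult = is_der_mult[OF der_dY] and dZ_mult = is_der_mult[OF der_dZ]
lemmas dX_diff = is_der_diff[OF der_dX] and dY_diff = is_der_diff[OF der_dY] and dZ_diff = is_der_diff[OF der_dZ]
lemmas dX_0 = is_der_0[OF der_dX] and dY_0 = is_der_0[OF der_dY] and dZ_0 = is_der_0[OF der_dZ]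

lemma dX_cst [simp]: "dX (cst c) = 0" by (simp add: dX_def cst_def map_poly_pCons)
lemma dY_cst [simp]: "dY (cst c) = 0" by (simp add: dY_def cst_def map_poly_pCons)
lemma dZ_cst [simp]: "dZ (cst c) = 0" by (simp add: dZ_def cst_def)
lemma cst_1: "cst 1 = 1" by (simp add: cst_def one_pCons)
lemma cst_0: "cst 0 = 0" by (simp add: cst_def)
lemma cst_add: "cst (x+y) = cst x + cst y" by (simp add: cst_def)
lemma cst_mult: "cst (x*y) = cst x * cst y" by (simp add: cst_def)
lemma of_nat_cst: "(of_nat n :: A3) = cst (of_nat n)"
  by (induction n) (simp_all add: cst_0 cst_1 cst_add)
lemma dX_1 [simp]: "dX 1 = 0" using dX_cst[of 1] by (simp add: cst_1)
lemma dY_1 [simp]: "dY 1 = 0" using dY_cst[of 1] by (simp add: cst_1)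
lemma dZ_1 [simp]: "dZ 1 = 0" using dZ_cst[of 1] by (simp add: cst_1)

lemma dX_varX [simp]: "dX varX = 1" by (simp add: dX_def varX_def map_poly_pCons one_pCons pderiv_pCons)
lemma dY_varX [simp]: "dY varX = 0" by (simp add: dY_def varX_def map_poly_pCons)
lemma dZ_varX [simp]: "dZ varX = 0" by (simp add: dZ_def varX_def)
lemma dX_varY [simp]: "dX varY = 0" by (simp add: dX_def varY_def map_poly_pCons)
lemma dY_varY [simp]: "dY varY = 1" by (simp add: dY_def varY_def map_poly_pCons one_pCons pderiv_pCons)
lemma dZ_varY [simp]: "dZ varY = 0" by (simp add: dZ_def varY_def)
lemma dX_varZ [simp]: "dX varZ = 0" by (simp add: dX_def varZ_def map_poly_pCons map_poly_1)
lemma dY_varZ [simp]: "dY varZ = 0" unfolding dY_def varZ_def by (subst map_poly_pCons, simp, subst map_poly_pCons, simp, simp)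
lemma dZ_varZ [simp]: "dZ varZ = 1" by (simp add: dZ_def varZ_def pderiv_pCons one_pCons)

lemma pbr_add2: "pbr a b (u+v) = pbr a b u + pbr a b v"
  by (simp add: pbr_def dX_add dY_add dZ_add algebra_simps)
lemma pbr_mult2: "pbr a b (u*v) = pbr a b u * v + u * pbr a b v"
  by (simp add: pbr_def dX_mult dY_mult dZ_mult algebra_simps)
lemma pbr_diff2: "pbr a b (u-v) = pbr a b u - pbr a b v"
  by (simp add: pbr_def dX_diff dY_diff dZ_diff algebra_simps)
lemma pbr_zero2 [simp]: "pbr a b 0 = 0" by (simp add: pbr_def dX_0 dY_0 dZ_0)
lemma pbr_one2 [simp]: "pbr a b 1 = 0" by (simp add: pbr_def)
lemma pbr_cst2 [simp]: "pbr a b (cst c) = 0" by (simp add: pbr_def)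
lemma pbr_cas: "pbr a b a = 0" by (simp add: pbr_def algebra_simps)
lemma pbr_varX: "pbr a varX w = dZ a * dY w - dY a * dZ w" by (simp add: pbr_def algebra_simps)
lemma pbr_varY: "pbr a varY w = dX a * dZ w - dZ a * dX w" by (simp add: pbr_def algebra_simps)
lemma pbr_varZ: "pbr a varZ w = dY a * dX w - dX a * dY w" by (simp add: pbr_def algebra_simps)

lemma pbr_pow: "pbr a b (p ^ Suc n) = of_nat (Suc n) * p ^ n * pbr a b p"
proof (induction n)
  case 0 then show ?case by simp
next
  case (Suc n)
  have "pbr a b (p ^ Suc (Suc n)) = pbr a b (p * p ^ Suc n)" by simp
  also have "\<dots> = pbr a b p * p ^ Suc n + p * (of_nat (Suc n) * p ^ n * pbr a b p)"
    by (simp only: pbr_mult2 Suc.IH)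
  also have "\<dots> = of_nat (Suc (Suc n)) * p ^ Suc n * pbr a b p" by (simp add: algebra_simps)
  finally show ?case .
qed

lemma ideal_0: "is_ideal I \<Longrightarrow> 0 \<in> I" by (simp add: is_ideal_def)
lemma ideal_add: "is_ideal I \<Longrightarrow> u \<in> I \<Longrightarrow> v \<in> I \<Longrightarrow> u + v \<in> I" by (simp add: is_ideal_def)
lemma ideal_mult: "is_ideal I \<Longrightarrow> u \<in> I \<Longrightarrow> r * u \<in> I" by (simp add: is_ideal_def)
lemma ideal_mult2: "is_ideal I \<Longrightarrow> u \<in> I \<Longrightarrow> u * r \<in> I" by (simp add: is_ideal_def mult.commute)
lemma ideal_uminus: "is_ideal I \<Longrightarrow> u \<in> I \<Longrightarrow> - u \<in> I"
  using ideal_mult[of I u "-1"] by simp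
lemma ideal_diff: "is_ideal I \<Longrightarrow> u \<in> I \<Longrightarrow> v \<in> I \<Longrightarrow> u - v \<in> I"
  using ideal_add[of I u "-v"] ideal_uminus[of I v] by simp
lemma ideal_unit: "is_ideal I \<Longrightarrow> u \<in> I \<Longrightarrow> is_unit u \<Longrightarrow> I = UNIV"
proof -
  assume I: "is_ideal I" and u: "u \<in> I" "is_unit u"
  from u(2) obtain v where "1 = u * v" by (auto elim: dvdE)
  then have one: "1 \<in> I" using ideal_mult2[OF I u(1), of v] by simp
  show "I = UNIV" using ideal_mult2[OF I one] by auto
qed
lemma ideal_dvd: "is_ideal I \<Longrightarrow> u \<in> I \<Longrightarrow> u dvd v \<Longrightarrow> v \<in> I"
  by (auto elim!: dvdE intro: ideal_mult2)

lemma principal_eq: "principal p = {w. p dvd w}"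
  by (auto simp: principal_def dvd_def)

lemma principal_prime:
  assumes "is_prime_ideal (principal p)" "p \<noteq> 0"
  shows "prime_elem p"
proof -
  have "\<not> is_unit p"
  proof
    assume "is_unit p"
    then have "principal p = UNIV" by (auto simp: principal_eq intro: unit_imp_dvd dvd_trans)
    then show False using assms(1) by (simp add: is_prime_ideal_def)
  qed
  then show ?thesis using assms unfolding prime_elem_def is_prime_ideal_def principal_eq by auto
qed

lemma unit_of_nat_A3: "is_unit (of_nat (Suc n) :: A3)"
proof -
  have "(of_nat (Suc n) :: A3) * cst (1 / of_nat (Suc n)) = 1"
    by (simp add: of_nat_cst flip: cst_mult cst_1 del: of_nat_Suc)
  then show ?thesis by (metis dvd_triv_left)
qed

lemma rev_dir:
  assumes na: "a \<notin> range cst" and irr: "irreducible p" and dv: "p dvd a - cst \<mu>"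
  shows "poisson_prime a (principal p)"
proof -
  have pe: "prime_elem p" using irr by (rule irreducible_imp_prime_elem)
  have p0: "p \<noteq> 0" and pu: "\<not> is_unit p" using pe by (auto simp: prime_elem_def)
  define x where "x = a - cst \<mu>"
  have x0: "x \<noteq> 0" using na by (auto simp: x_def)
  obtain y where xy: "x = p ^ multiplicity p x * y" "\<not> p dvd y"
    using multiplicity_decompose'[OF x0 pu] by blast
  have "multiplicity p x > 0" using dv x0 pu by (simp add: x_def multiplicity_gt_zero_iff)
  then obtain j where j: "multiplicity p x = Suc j" by (cases "multiplicity p x") auto
  have key: "p dvd pbr a b p" for b
  proof -
    have "pbr a b x = 0" by (simp add: x_def pbr_diff2 pbr_cas)
    then have "pbr a b (p ^ Suc j * y) = 0" using xy j by simp
    then have "of_nat (Suc j) * p ^ j * pbr a b p * y + p ^ Suc j * pbr a b y = 0"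
      by (simp only: pbr_mult2 pbr_pow)
    then have "p ^ j * (of_nat (Suc j) * (pbr a b p * y) + p * pbr a b y) = 0"
      by (simp add: algebra_simps)
    then have "of_nat (Suc j) * (pbr a b p * y) + p * pbr a b y = 0" using p0 by simp
    then have "of_nat (Suc j) * (pbr a b p * y) = - (p * pbr a b y)" by (simp add: eq_neg_iff_add_eq_0)
    then have "p dvd of_nat (Suc j) * (pbr a b p * y)" by simp
    then have "p dvd pbr a b p * y" using unit_of_nat_A3 by (simp add: dvd_mult_unit_iff')
    then show ?thesis using pe xy(2) by (auto dest: prime_elem_dvd_multD)
  qed
  have "is_ideal (principal p)"
    by (auto simp: is_ideal_def principal_eq)
  moreover have "principal p \<noteq> UNIV" using pu by (auto simp: principal_eq)
  moreover have "\<forall>u v. u * v \<in> principal p \<longrightarrow> u \<in> principal p \<or> v \<in> principal p"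
    using pe by (auto simp: principal_eq dest: prime_elem_dvd_multD)
  moreover have "\<forall>b. \<forall>u\<in>principal p. pbr a b u \<in> principal p"
  proof (intro allI ballI)
    fix b u assume "u \<in> principal p"
    then obtain r where "u = p * r" by (auto simp: principal_eq elim: dvdE)
    then show "pbr a b u \<in> principal p"
      using key[of b] by (simp add: principal_eq pbr_mult2)
  qed
  ultimately show ?thesis by (simp add: poisson_prime_def is_prime_ideal_def)
qed

lemma zero_poisson_prime: "poisson_prime a {0}"
proof -
  have "(1::A3) \<notin> {0}" by simp
  then have "{0::A3} \<noteq> UNIV" by blast
  then show ?thesis by (simp add: poisson_prime_def is_prime_ideal_def is_ideal_def)
qed



lemma prod_mset_in:
  fixes M :: "'b::comm_semiring_1 set"
  assumes mul: "\<And>u v. u*v \<in> M \<Longrightarrow> u \<in> M \<or> v \<in> M" and one: "1 \<notin> M"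
  shows "prod_mset A \<in> M \<Longrightarrow> \<exists>q. q \<in># A \<and> q \<in> M"
proof (induction A)
  case empty then show ?case using one by simp
next
  case (add x A)
  then have "x \<in> M \<or> prod_mset A \<in> M" using mul by simp
  then show ?case using add.IH by auto
qed

lemma prime_factor_in:
  fixes M :: "'b::factorial_semiring set"
  assumes mul: "\<And>u v. u*v \<in> M \<Longrightarrow> u \<in> M \<or> v \<in> M" and idl: "\<And>u r. u \<in> M \<Longrightarrow> u*r \<in> M"
    and one: "1 \<notin> M" and w: "w \<in> M" "w \<noteq> 0"
  shows "\<exists>q. prime q \<and> q dvd w \<and> q \<in> M"
proof -
  obtain A where A: "\<And>x. x \<in># A \<Longrightarrow> prime x" "normalize (prod_mset A) = normalize w"
    using prime_factorization_exists'[OF w(2)] by blast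
  have d1: "w dvd prod_mset A"
  proof -
    have "normalize (prod_mset A) dvd prod_mset A" by simp
    then have "normalize w dvd prod_mset A" using A(2) by simp
    then show ?thesis by simp
  qed
  have d2: "prod_mset A dvd w"
  proof -
    have "normalize w dvd w" by simp
    then have "normalize (prod_mset A) dvd w" using A(2) by simp
    then show ?thesis by simp
  qed
  from d1 obtain r where "prod_mset A = w * r" by (auto elim: dvdE)
  then have "prod_mset A \<in> M" using idl w(1) by simp
  then obtain q where q: "q \<in># A" "q \<in> M" using prod_mset_in[OF mul one] by blast
  have "q dvd prod_mset A" using q(1) by (rule dvd_prod_mset)
  then have "q dvd w" using d2 by (rule dvd_trans)
  then show ?thesis using q A(1) by blast
qed

lemma poly_in_ideal:
  assumes PI: "is_ideal P"
  shows "(\<And>i. [:coeff q i:] \<in> P) \<Longrightarrow> (q::A3) \<in> P"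
proof (induction q)
  case 0 then show ?case using ideal_0[OF PI] by simp
next
  case (pCons c q)
  have "[:c:] \<in> P" using pCons.prems[of 0] by simp
  moreover have "q \<in> P"
  proof (rule pCons.IH)
    fix i show "[:coeff q i:] \<in> P" using pCons.prems[of "Suc i"] by simp
  qed
  then have "varZ * q \<in> P" using ideal_mult[OF PI] by blast
  ultimately have "[:c:] + varZ * q \<in> P" using ideal_add[OF PI] by blast
  moreover have "pCons c q = [:c:] + varZ * q" by (simp add: varZ_def)
  ultimately show ?case by simp
qed

lemma cst_of_nat_mult: "[:of_nat k * r:] = (of_nat k :: A3) * [:r:]"
  by (simp add: of_nat_poly)

lemma ideal_of_nat_cancel:
  assumes PI: "is_ideal P" and "(of_nat (Suc k) :: A3) * x \<in> P"
  shows "x \<in> P"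
proof -
  have "cst (1 / of_nat (Suc k)) * ((of_nat (Suc k) :: A3) * x) \<in> P" using ideal_mult[OF PI assms(2)] .
  moreover have "cst (1 / of_nat (Suc k)) * (of_nat (Suc k) :: A3) = 1"
    by (simp add: of_nat_cst flip: cst_mult cst_1 del: of_nat_Suc)
  ultimately show ?thesis by (simp add: mult.assoc[symmetric])
qed

lemma z_closure:
  assumes PI: "is_ideal P" and cl: "\<And>w. w \<in> P \<Longrightarrow> dZ w \<in> P"
  shows "w \<in> P \<Longrightarrow> [:coeff w i:] \<in> P"
proof (induction "degree w" arbitrary: w i rule: less_induct)
  case less
  show ?case
  proof (cases "degree w = 0")
    case True
    then obtain c where w: "w = [:c:]" by (metis degree_eq_zeroE)
    show ?thesis
    proof (cases i)
      case 0 then show ?thesis using less.prems w by simp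
    next
      case (Suc j) then show ?thesis using w ideal_0[OF PI] by simp
    qed
  next
    case False
    have dw: "dZ w \<in> P" using cl less.prems .
    have deg: "degree (pderiv w) < degree w" using False by (simp add: degree_pderiv)
    have hi: "[:coeff w (Suc j):] \<in> P" for j
    proof -
      have "[:coeff (pderiv w) j:] \<in> P" using less.hyps[OF deg] dw by (simp add: dZ_def)
      then have "(of_nat (Suc j) :: A3) * [:coeff w (Suc j):] \<in> P"
        by (simp only: coeff_pderiv cst_of_nat_mult)
      then show ?thesis by (rule ideal_of_nat_cancel[OF PI])
    qed
    obtain c q where wq: "w = pCons c q" by (cases w) auto
    have "q \<in> P"
    proof (rule poly_in_ideal[OF PI])
      fix i show "[:coeff q i:] \<in> P" using hi[of i] wq by simp
    qed
    then have "varZ * q \<in> P" using ideal_mult[OF PI] by blast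
    then have "w - varZ * q \<in> P" using ideal_diff[OF PI less.prems] by blast
    moreover have "w - varZ * q = [:c:]" using wq by (simp add: varZ_def)
    ultimately have "[:c:] \<in> P" by simp
    then show ?thesis using hi wq by (cases i) auto
  qed
qed



lemma cst_unit: "k \<noteq> 0 \<Longrightarrow> is_unit (cst k)"
proof -
  assume "k \<noteq> 0"
  then have "cst k * cst (1/k) = 1" by (simp flip: cst_mult cst_1)
  then show ?thesis by (metis dvd_triv_left)
qed

lemma unit_notin: "is_ideal P \<Longrightarrow> P \<noteq> UNIV \<Longrightarrow> is_unit u \<Longrightarrow> u \<notin> P"
  using ideal_unit by blast

lemma root_in:
  assumes PI: "is_ideal P" and PU: "P \<noteq> UNIV" and PP: "\<And>u v. u*v \<in> P \<Longrightarrow> u \<in> P \<or> v \<in> P"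
  shows "f \<noteq> 0 \<Longrightarrow> [:[:f:]:] \<in> P \<Longrightarrow> \<exists>c. [:[:[:-c,1:]:]:] \<in> P"
proof (induction "degree f" arbitrary: f rule: less_induct)
  case less
  show ?case
  proof (cases "degree f = 0")
    case True
    then obtain k where f: "f = [:k:]" by (metis degree_eq_zeroE)
    then have "k \<noteq> 0" using less.prems by simp
    then have "is_unit (cst k)" by (rule cst_unit)
    moreover have "cst k \<in> P" using less.prems f by (simp add: cst_def)
    ultimately show ?thesis using unit_notin[OF PI PU] by blast
  next
    case False
    then have "\<not> constant (poly f)" by (simp add: constant_degree)
    then obtain c where "poly f c = 0" using fundamental_theorem_of_algebra by blast
    then obtain f' where f': "f = [:-c, 1:] * f'" by (metis poly_eq_0_iff_dvd dvdE)
    have f'0: "f' \<noteq> 0" using less.prems f' by auto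
    have df: "degree f = Suc (degree f')" unfolding f' using f'0 by (subst degree_mult_eq) auto
    have "[:[:f:]:] = [:[:[:-c, 1:]:]:] * [:[:f':]:]" using f' by simp
    then have "[:[:[:-c, 1:]:]:] \<in> P \<or> [:[:f':]:] \<in> P" using PP less.prems by metis
    then show ?thesis using less.hyps[of f'] f'0 df by auto
  qed
qed

definition evx :: "complex \<Rightarrow> complex poly poly \<Rightarrow> complex poly poly" where
  "evx c r = map_poly (\<lambda>q. [:poly q c:]) r"

lemma coeff_evx: "coeff (evx c r) i = [:poly (coeff r i) c:]"
  by (simp add: evx_def coeff_map_poly)

lemma evx_mult: "evx c (x*y) = evx c x * evx c y"
  unfolding evx_def by (rule map_poly_hom_mult) (simp_all add: poly_mult)

lemma evx_diff: "evx c (x - y) = evx c x - evx c y"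
  by (rule poly_eqI) (simp add: coeff_evx)

lemma evx_pderiv: "evx c (pderiv r) = pderiv (evx c r)"
  by (rule poly_eqI) (simp add: coeff_evx coeff_pderiv of_nat_poly)

lemma evx_lin: "evx c [:[:-c,1:]:] = 0"
  by (rule poly_eqI) (simp add: coeff_evx coeff_pCons split: nat.splits)

lemma dvd_evx: "[:[:-c,1:]:] dvd r - evx c r"
proof -
  have "[:-c,1:] dvd coeff (r - evx c r) n" for n
    by (simp add: coeff_evx poly_eq_0_iff_dvd[symmetric])
  then show ?thesis by (simp add: const_poly_dvd_iff)
qed

lemma evx_zero_dvd: "[:[:-c,1:]:] dvd r \<Longrightarrow> evx c r = 0"
proof -
  assume "[:[:-c,1:]:] dvd r"
  then obtain k where "r = [:[:-c,1:]:] * k" by (auto elim: dvdE)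
  then have "evx c r = evx c [:[:-c,1:]:] * evx c k" by (simp only: evx_mult)
  then show ?thesis by (simp add: evx_lin)
qed

lemma const_coeff_contra:
  assumes PI: "is_ideal P" and PU: "P \<noteq> UNIV" and clY: "\<And>r. [:r:] \<in> P \<Longrightarrow> [:pderiv r:] \<in> P"
  shows "(\<And>i. \<exists>k. coeff e i = [:k:]) \<Longrightarrow> [:e:] \<in> P \<Longrightarrow> e \<noteq> 0 \<Longrightarrow> False"
proof (induction "degree e" arbitrary: e rule: less_induct)
  case less
  show ?case
  proof (cases "degree e = 0")
    case True
    then obtain c where e: "e = [:c:]" by (metis degree_eq_zeroE)
    obtain k where "coeff e 0 = [:k:]" using less.prems(1) by blast
    then have e': "e = [:[:k:]:]" using e by simp
    then have "k \<noteq> 0" using less.prems(3) by simp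
    then have "is_unit (cst k)" by (rule cst_unit)
    moreover have "cst k \<in> P" using less.prems(2) e' by (simp add: cst_def)
    ultimately show False using unit_notin[OF PI PU] by blast
  next
    case False
    have deg: "degree (pderiv e) < degree e" using False by (simp add: degree_pderiv)
    have nz: "pderiv e \<noteq> 0" using False by (simp add: pderiv_eq_0_iff)
    have co: "\<exists>k. coeff (pderiv e) i = [:k:]" for i
    proof -
      obtain k where "coeff e (Suc i) = [:k:]" using less.prems(1) by blast
      then show ?thesis by (auto simp: coeff_pderiv of_nat_poly)
    qed
    show False using less.hyps[OF deg co] clY[OF less.prems(2)] nz by blast
  qed
qed

lemma dY_const: "dY [:r:] = [:pderiv r:]"
  by (simp add: dY_def map_poly_pCons)
lemma dX_const: "dX [:r:] = [:map_poly pderiv r:]"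
  by (simp add: dX_def map_poly_pCons)
lemma dZ_const: "dZ [:r:] = 0"
  by (simp add: dZ_def)
lemma coeff_dY: "coeff (dY w) i = pderiv (coeff w i)"
  by (simp add: dY_def coeff_map_poly)
lemma coeff_dX: "coeff (dX w) i = map_poly pderiv (coeff w i)"
  by (simp add: dX_def coeff_map_poly)

lemma unit_R: "is_unit (of_nat (Suc i) :: complex poly poly)"
proof -
  have "(of_nat (Suc i) :: complex poly poly) * [:[:1 / of_nat (Suc i):]:] = 1"
    by (simp add: of_nat_poly one_pCons del: of_nat_Suc)
  then show ?thesis by (metis dvd_triv_left)
qed

lemma unit_C: "is_unit (of_nat (Suc i) :: complex poly)"
proof -
  have "(of_nat (Suc i) :: complex poly) * [:1 / of_nat (Suc i):] = 1"
    by (simp add: of_nat_poly one_pCons del: of_nat_Suc)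
  then show ?thesis by (metis dvd_triv_left)
qed

lemma prime_of_principal:
  assumes "is_prime_ideal P" "P = principal L" "L \<noteq> 0"
  shows "irreducible L"
  using principal_prime[of L] assms prime_elem_imp_irreducible by blast

lemma case3:
  assumes PI: "is_ideal P" and PU: "P \<noteq> UNIV" and PP: "\<And>u v. u*v \<in> P \<Longrightarrow> u \<in> P \<or> v \<in> P"
    and PB: "\<And>b u. u \<in> P \<Longrightarrow> pbr a b u \<in> P"
    and notN: "\<not> (dX a \<in> P \<and> dY a \<in> P \<and> dZ a \<in> P)"
    and f: "f \<noteq> 0" "[:[:f:]:] \<in> P"
  shows "\<exists>p \<mu>. irreducible p \<and> p dvd a - cst \<mu> \<and> P = principal p"
proof -
  obtain c where Lin: "[:[:[:-c,1:]:]:] \<in> P" using root_in[OF PI PU PP f] by blast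
  define X :: "complex poly poly" where "X = [:[:-c,1:]:]"
  define L :: A3 where "L = [:X:]"
  have LP: "L \<in> P" using Lin by (simp add: L_def X_def)
  have dL: "dX L = 1" "dY L = 0" "dZ L = 0"
    by (simp_all add: L_def X_def dX_def dY_def dZ_def map_poly_pCons pderiv_pCons one_pCons)
  have "pbr a varY L \<in> P" using PB LP .
  then have "- dZ a \<in> P" by (simp add: pbr_varY dL)
  then have aZ: "dZ a \<in> P" using ideal_uminus[OF PI] by fastforce
  have "pbr a varZ L \<in> P" using PB LP .
  then have aY: "dY a \<in> P" by (simp add: pbr_varZ dL)
  have nX: "dX a \<notin> P" using notN aZ aY by blast
  have clZ: "dZ w \<in> P" if w: "w \<in> P" for w
  proof -
    have "pbr a varY w \<in> P" using PB w .
    then have "dX a * dZ w - dZ a * dX w \<in> P" by (simp add: pbr_varY)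
    moreover have "dZ a * dX w \<in> P" using ideal_mult2[OF PI aZ] .
    ultimately have "dX a * dZ w \<in> P" using ideal_add[OF PI] by fastforce
    then show ?thesis using PP nX by blast
  qed
  have clY: "dY w \<in> P" if w: "w \<in> P" for w
  proof -
    have "pbr a varZ w \<in> P" using PB w .
    then have "dY a * dX w - dX a * dY w \<in> P" by (simp add: pbr_varZ)
    moreover have "dY a * dX w \<in> P" using ideal_mult2[OF PI aY] .
    ultimately have "dX a * dY w \<in> P" using ideal_diff[OF PI] by fastforce
    then show ?thesis using PP nX by blast
  qed
  have clYr: "[:pderiv r:] \<in> P" if "[:r:] \<in> P" for r
    using clY[OF that] by (simp add: dY_const)
  have Qsub: "X dvd r" if r: "[:r:] \<in> P" for r
  proof -
    have "X dvd r - evx c r" unfolding X_def by (rule dvd_evx)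
    then have "L dvd [:r - evx c r:]" by (simp add: L_def)
    then have "[:r - evx c r:] \<in> P" using ideal_dvd[OF PI LP] by blast
    then have "[:r:] - [:r - evx c r:] \<in> P" using ideal_diff[OF PI r] by blast
    then have ev: "[:evx c r:] \<in> P" by simp
    have "evx c r = 0"
    proof (rule ccontr)
      assume "evx c r \<noteq> 0"
      moreover have "\<exists>k. coeff (evx c r) i = [:k:]" for i by (simp add: coeff_evx)
      ultimately show False using const_coeff_contra[OF PI PU clYr] ev by blast
    qed
    then show ?thesis using dvd_evx[of c r] by (simp add: X_def)
  qed
  have Pprin: "P = principal L"
  proof
    show "P \<subseteq> principal L"
    proof
      fix w assume w: "w \<in> P"
      have "X dvd coeff w i" for i using Qsub z_closure[OF PI clZ w] by blast
      then have "L dvd w" by (simp add: L_def const_poly_dvd_iff)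
      then show "w \<in> principal L" by (simp add: principal_eq)
    qed
  next
    show "principal L \<subseteq> P" using ideal_dvd[OF PI LP] by (auto simp: principal_eq)
  qed
  have hi: "X dvd coeff a (Suc i)" for i
  proof -
    have "X dvd coeff (dZ a) i" using Qsub z_closure[OF PI clZ aZ] by blast
    then have "X dvd of_nat (Suc i) * coeff a (Suc i)" by (simp add: dZ_def coeff_pderiv del: of_nat_Suc)
    then show ?thesis using unit_R by (simp add: dvd_mult_unit_iff' del: of_nat_Suc)
  qed
  define r0 where "r0 = coeff a 0"
  have "X dvd coeff (dY a) 0" using Qsub z_closure[OF PI clZ aY] by blast
  then have "X dvd pderiv r0" by (simp add: coeff_dY r0_def)
  then have "evx c (pderiv r0) = 0" unfolding X_def by (rule evx_zero_dvd)
  then have "pderiv (evx c r0) = 0" by (simp add: evx_pderiv)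
  then have "degree (evx c r0) = 0" by (simp add: pderiv_eq_0_iff)
  then have "evx c r0 = [:coeff (evx c r0) 0:]" by (metis degree_eq_zeroE coeff_pCons_0)
  then obtain \<mu> where mu: "evx c r0 = [:[:\<mu>:]:]" by (simp add: coeff_evx)
  have "X dvd r0 - [:[:\<mu>:]:]" using dvd_evx[of c r0] mu by (simp add: X_def)
  then have "X dvd coeff (a - cst \<mu>) n" for n
    using hi by (cases n) (simp_all add: cst_def r0_def)
  then have "L dvd a - cst \<mu>" by (simp add: L_def const_poly_dvd_iff)
  moreover have "irreducible L"
  proof (rule prime_of_principal[OF _ Pprin])
    show "is_prime_ideal P" using PI PU PP by (simp add: is_prime_ideal_def)
    show "L \<noteq> 0" by (simp add: L_def X_def)
  qed
  ultimately show ?thesis using Pprin by blast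
qed



lemma coeff_mult_const_right: "coeff (p * [:x:]) i = coeff p i * x"
  by (simp add: mult.commute)

lemma case2:
  assumes PI: "is_ideal P" and PU: "P \<noteq> UNIV" and PP: "\<And>u v. u*v \<in> P \<Longrightarrow> u \<in> P \<or> v \<in> P"
    and PB: "\<And>b u. u \<in> P \<Longrightarrow> pbr a b u \<in> P"
    and notN: "\<not> (dX a \<in> P \<and> dY a \<in> P \<and> dZ a \<in> P)"
    and notIII: "\<And>f. f \<noteq> 0 \<Longrightarrow> [:[:f:]:] \<notin> P"
    and r: "r \<noteq> 0" "[:r:] \<in> P"
  shows "\<exists>p \<mu>. irreducible p \<and> p dvd a - cst \<mu> \<and> P = principal p"
proof -
  define Q where "Q = {r. [:r:] \<in> P}"
  have Qmul: "u \<in> Q \<or> v \<in> Q" if "u * v \<in> Q" for u v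
  proof -
    have e: "[:u:] * [:v:] = [:u * v:]" by (simp add: mult.commute)
    have "[:u:] * [:v:] \<in> P" using that unfolding e Q_def by simp
    then show ?thesis using PP by (simp add: Q_def)
  qed
  have Qidl: "u * r \<in> Q" if "u \<in> Q" for u r
    using that ideal_mult2[OF PI, of "[:u:]" "[:r:]"] by (simp add: Q_def mult.commute)
  have Qone: "1 \<notin> Q"
  proof
    assume "1 \<in> Q"
    then have "[:1:] \<in> P" by (simp add: Q_def)
    then have "(1::A3) \<in> P" by (simp only: one_pCons[symmetric])
    then show False using unit_notin[OF PI PU, of 1] by simp
  qed
  have "\<exists>k t. t \<in> Q \<and> t \<noteq> 0 \<and> degree t = k" using r by (auto simp: Q_def)
  define d where "d = (LEAST k. \<exists>t. t \<in> Q \<and> t \<noteq> 0 \<and> degree t = k)"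
  have "\<exists>t. t \<in> Q \<and> t \<noteq> 0 \<and> degree t = d"
    unfolding d_def by (rule LeastI_ex) (use \<open>\<exists>k t. _\<close> in blast)
  then obtain s0 where s0: "s0 \<in> Q" "s0 \<noteq> 0" "degree s0 = d" by blast
  have dmin: "d \<le> degree t" if "t \<in> Q" "t \<noteq> 0" for t
    unfolding d_def by (rule Least_le) (use that in blast)
  obtain s where s: "prime s" "s dvd s0" "s \<in> Q"
    using prime_factor_in[OF Qmul Qidl Qone s0(1,2)] by blast
  have sne: "s \<noteq> 0" using s(1) by auto
  have "degree s \<le> d" using dvd_imp_degree_le[OF s(2) s0(2)] s0(3) by simp
  then have ds: "degree s = d" using dmin[OF s(3) sne] by simp
  have sP: "[:s:] \<in> P" using s(3) by (simp add: Q_def)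
  have dpos: "degree s > 0"
  proof (rule ccontr)
    assume "\<not> degree s > 0"
    then obtain f where "s = [:f:]" by (metis degree_eq_zeroE neq0_conv)
    then show False using notIII[of f] sne sP by auto
  qed
  have ps: "[:pderiv s:] \<notin> P"
  proof
    assume "[:pderiv s:] \<in> P"
    moreover have "pderiv s \<noteq> 0" using dpos by (simp add: pderiv_eq_0_iff)
    ultimately have "d \<le> degree (pderiv s)" using dmin by (simp add: Q_def)
    then show False using dpos ds by (simp add: degree_pderiv)
  qed
  have "pbr a varX [:s:] \<in> P" using PB sP .
  then have "dZ a * [:pderiv s:] \<in> P" by (simp add: pbr_varX dY_const dZ_const)
  then have aZ: "dZ a \<in> P" using PP ps by blast
  have clZ: "dZ w \<in> P" if w: "w \<in> P" for w
  proof (cases "dX a \<in> P")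
    case False
    have "pbr a varY w \<in> P" using PB w .
    then have "dX a * dZ w - dZ a * dX w \<in> P" by (simp add: pbr_varY)
    moreover have "dZ a * dX w \<in> P" using ideal_mult2[OF PI aZ] .
    ultimately have "dX a * dZ w \<in> P" using ideal_add[OF PI] by fastforce
    then show ?thesis using PP False by blast
  next
    case True
    then have nY: "dY a \<notin> P" using notN aZ by blast
    have "pbr a varX w \<in> P" using PB w .
    then have "dZ a * dY w - dY a * dZ w \<in> P" by (simp add: pbr_varX)
    moreover have "dZ a * dY w \<in> P" using ideal_mult2[OF PI aZ] .
    ultimately have "dY a * dZ w \<in> P" using ideal_diff[OF PI] by fastforce
    then show ?thesis using PP nY by blast
  qed
  have Qsub: "s dvd t" if t: "[:t:] \<in> P" for t
  proof -
    define rr where "rr = pseudo_mod t s"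
    obtain \<alpha> q where aq: "\<alpha> \<noteq> 0" "smult \<alpha> t = s * q + rr"
      using pseudo_mod(1)[OF sne, of t] rr_def by blast
    have rdeg: "rr = 0 \<or> degree rr < degree s" using pseudo_mod(2)[OF sne, of t] rr_def by blast
    have "[:smult \<alpha> t:] \<in> P"
    proof -
      have e: "[:[:\<alpha>:]:] * [:t:] = [:smult \<alpha> t:]" by simp
      have "[:[:\<alpha>:]:] * [:t:] \<in> P" by (rule ideal_mult[OF PI t])
      then show ?thesis unfolding e .
    qed
    moreover have "[:s * q:] \<in> P"
    proof -
      have e: "[:s:] * [:q:] = [:s * q:]" by (simp add: mult.commute)
      have "[:s:] * [:q:] \<in> P" by (rule ideal_mult2[OF PI sP])
      then show ?thesis unfolding e .
    qed
    ultimately have "[:smult \<alpha> t:] - [:s * q:] \<in> P" using ideal_diff[OF PI] by blast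
    then have "[:rr:] \<in> P" using aq(2) by (simp add: algebra_simps)
    then have rP: "[:rr:] \<in> P" .
    have "rr = 0"
    proof (rule ccontr)
      assume rr0: "rr \<noteq> 0"
      then have "d \<le> degree rr" using dmin[of rr] rP by (simp add: Q_def)
      then show False using rdeg rr0 ds by simp
    qed
    then have "s dvd [:\<alpha>:] * t" using aq(2) by simp
    moreover have "\<not> s dvd [:\<alpha>:]"
    proof
      assume "s dvd [:\<alpha>:]"
      then have "degree s \<le> 0" using aq(1) dvd_imp_degree_le[of s "[:\<alpha>:]"] by simp
      then show False using dpos by simp
    qed
    ultimately show ?thesis using prime_dvd_multD[OF s(1), of "[:\<alpha>:]" t] by blast
  qed
  have Pprin: "P = principal [:s:]"
  proof
    show "P \<subseteq> principal [:s:]"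
    proof
      fix w assume w: "w \<in> P"
      have "s dvd coeff w i" for i using Qsub z_closure[OF PI clZ w] by blast
      then have "[:s:] dvd w" by (simp add: const_poly_dvd_iff)
      then show "w \<in> principal [:s:]" by (simp add: principal_eq)
    qed
  next
    show "principal [:s:] \<subseteq> P" using ideal_dvd[OF PI sP] by (auto simp: principal_eq)
  qed
  define g where "g = coeff a 0"
  have hyp: "s dvd map_poly pderiv g * pderiv s - pderiv g * map_poly pderiv s"
  proof -
    have "pbr a varZ [:s:] \<in> P" using PB sP .
    then have W: "dY a * [:map_poly pderiv s:] - dX a * [:pderiv s:] \<in> P"
      by (simp add: pbr_varZ dX_const dY_const)
    have "s dvd coeff (dY a * [:map_poly pderiv s:] - dX a * [:pderiv s:]) 0"
      using Qsub z_closure[OF PI clZ W] by blast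
    then have "s dvd pderiv g * map_poly pderiv s - map_poly pderiv g * pderiv s"
      by (simp add: coeff_mult_const_right coeff_dY coeff_dX g_def mult.commute)
    moreover have "map_poly pderiv g * pderiv s - pderiv g * map_poly pderiv s
        = - (pderiv g * map_poly pderiv s - map_poly pderiv g * pderiv s)" by (simp add: algebra_simps)
    ultimately show ?thesis by (simp only: dvd_minus_iff)
  qed
  have "\<exists>\<mu>. s dvd g - [:[:\<mu>:]:]"
  proof (rule const_lemma[where Ds = "[pderiv]" and m = degree and emb = "\<lambda>k. [:k:]"])
    show "is_der D" if "D \<in> set [pderiv]" for D :: "complex poly \<Rightarrow> complex poly"
      using that is_der_pderiv by simp
    show "(\<forall>D\<in>set [pderiv]. D c = 0) \<or> (\<exists>D\<in>set [pderiv]. D c \<noteq> 0 \<and> degree (D c) < degree c)"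
      for c :: "complex poly"
      by (cases "pderiv c = 0") (auto simp: degree_pderiv pderiv_eq_0_iff)
    show "c \<in> range (\<lambda>k. [:k:])" if "\<forall>D\<in>set [pderiv]. D c = 0" for c :: "complex poly"
      using that by (auto simp: pderiv_eq_0_iff elim!: degree_eq_zeroE)
    show "[:x + y:] = [:x:] + [:y:]" for x y :: complex by simp
    show "[:x * y:] = [:x:] * [:y:]" for x y :: complex by simp
    show "[:1::complex:] = 1" by (simp only: one_pCons[symmetric])
    show "x = 0" if "[:x:] = 0" for x :: complex using that by simp
    show "s dvd u \<or> s dvd v" if "s dvd u * v" for u v using that s(1) by (auto dest: prime_dvd_multD)
    show "degree s > 0" by (rule dpos)
    show "s dvd map_poly D g * pderiv s - pderiv g * map_poly D s" if "D \<in> set [pderiv]" for D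
      using that hyp by simp
  qed
  then obtain \<mu> where mu: "s dvd g - [:[:\<mu>:]:]" by blast
  have hi: "s dvd coeff a (Suc i)" for i
  proof -
    have "s dvd coeff (dZ a) i" using Qsub z_closure[OF PI clZ aZ] by blast
    then have "s dvd of_nat (Suc i) * coeff a (Suc i)" by (simp add: dZ_def coeff_pderiv del: of_nat_Suc)
    then show ?thesis using unit_R by (simp add: dvd_mult_unit_iff' del: of_nat_Suc)
  qed
  have "s dvd coeff (a - cst \<mu>) n" for n
    using hi mu by (cases n) (simp_all add: cst_def g_def)
  then have "[:s:] dvd a - cst \<mu>" by (simp add: const_poly_dvd_iff)
  moreover have "irreducible [:s:]"
  proof (rule prime_of_principal[OF _ Pprin])
    show "is_prime_ideal P" using PI PU PP by (simp add: is_prime_ideal_def)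
    show "[:s:] \<noteq> 0" using sne by simp
  qed
  ultimately show ?thesis using Pprin by blast
qed



definition m3 :: "complex poly poly \<Rightarrow> nat" where
  "m3 c = degree c + (\<Sum>i\<le>degree c. degree (coeff c i))"

lemma meas3:
  fixes c :: "complex poly poly"
  shows "(\<forall>D\<in>set [map_poly pderiv, pderiv]. D c = 0)
       \<or> (\<exists>D\<in>set [map_poly pderiv, pderiv]. D c \<noteq> 0 \<and> m3 (D c) < m3 c)"
proof (cases "pderiv c = 0")
  case False
  then obtain n where n: "degree c = Suc n" by (cases "degree c") (auto simp: pderiv_eq_0_iff)
  have dp: "degree (pderiv c) = n" using n by (simp add: degree_pderiv)
  have cf: "degree (coeff (pderiv c) i) = degree (coeff c (Suc i))" for i
    by (simp add: coeff_pderiv of_nat_poly del: of_nat_Suc)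
  have "m3 (pderiv c) = n + (\<Sum>i\<le>n. degree (coeff c (Suc i)))"
    unfolding m3_def dp cf ..
  also have "\<dots> < Suc n + (degree (coeff c 0) + (\<Sum>i\<le>n. degree (coeff c (Suc i))))" by simp
  also have "\<dots> = m3 c"
  proof -
    have "(\<Sum>i\<le>Suc n. degree (coeff c i)) = degree (coeff c 0) + (\<Sum>i\<le>n. degree (coeff c (Suc i)))"
      by (rule sum.atMost_Suc_shift)
    then show ?thesis unfolding m3_def n by simp
  qed
  finally show ?thesis using False by auto
next
  case True
  then obtain c0 where c: "c = [:c0:]" by (metis degree_eq_zeroE pderiv_eq_0_iff)
  show ?thesis
  proof (cases "pderiv c0 = 0")
    case True
    then show ?thesis using \<open>pderiv c = 0\<close> by (simp add: c map_poly_pCons)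
  next
    case False
    have mp: "map_poly pderiv c = [:pderiv c0:]" by (simp add: c map_poly_pCons)
    have "m3 (map_poly pderiv c) = degree (pderiv c0)" by (simp add: mp m3_def)
    also have "\<dots> < degree c0" using False by (simp add: degree_pderiv pderiv_eq_0_iff)
    also have "\<dots> = m3 c" by (simp add: c m3_def)
    finally show ?thesis using False mp by auto
  qed
qed

lemma ker3:
  fixes c :: "complex poly poly"
  assumes "\<forall>D\<in>set [map_poly pderiv, pderiv]. D c = 0"
  shows "c \<in> range (\<lambda>k. [:[:k:]:])"
proof -
  have "pderiv c = 0" using assms by simp
  then obtain c0 where c: "c = [:c0:]" by (metis degree_eq_zeroE pderiv_eq_0_iff)
  have "map_poly pderiv c = 0" using assms by simp
  then have "pderiv c0 = 0" by (simp add: c map_poly_pCons)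
  then obtain k where "c0 = [:k:]" by (metis degree_eq_zeroE pderiv_eq_0_iff)
  then show ?thesis using c by auto
qed

lemma case1:
  assumes PI: "is_ideal P" and PU: "P \<noteq> UNIV" and PP: "\<And>u v. u*v \<in> P \<Longrightarrow> u \<in> P \<or> v \<in> P"
    and PB: "\<And>b u. u \<in> P \<Longrightarrow> pbr a b u \<in> P"
    and notII: "\<And>r. r \<noteq> 0 \<Longrightarrow> [:r:] \<notin> P"
    and w: "w \<in> P" "w \<noteq> 0"
  shows "\<exists>p \<mu>. irreducible p \<and> p dvd a - cst \<mu> \<and> P = principal p"
proof -
  have one: "(1::A3) \<notin> P" using unit_notin[OF PI PU, of 1] by simp
  have "\<exists>k t. t \<in> P \<and> t \<noteq> 0 \<and> degree t = k" using w by blast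
  define d where "d = (LEAST k. \<exists>t. t \<in> P \<and> t \<noteq> 0 \<and> degree t = k)"
  have "\<exists>t. t \<in> P \<and> t \<noteq> 0 \<and> degree t = d"
    unfolding d_def by (rule LeastI_ex) (use \<open>\<exists>k t. _\<close> in blast)
  then obtain s0 where s0: "s0 \<in> P" "s0 \<noteq> 0" "degree s0 = d" by blast
  have dmin: "d \<le> degree t" if "t \<in> P" "t \<noteq> 0" for t
    unfolding d_def by (rule Least_le) (use that in blast)
  obtain p where p: "prime p" "p dvd s0" "p \<in> P"
    using prime_factor_in[of P, OF PP ideal_mult2[OF PI] one s0(1,2)] by blast
  have pne: "p \<noteq> 0" using p(1) by auto
  have "degree p \<le> d" using dvd_imp_degree_le[OF p(2) s0(2)] s0(3) by simp
  then have dp: "degree p = d" using dmin[OF p(3) pne] by simp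
  have dpos: "degree p > 0"
  proof (rule ccontr)
    assume "\<not> degree p > 0"
    then obtain r where "p = [:r:]" by (metis degree_eq_zeroE neq0_conv)
    then show False using notII[of r] pne p(3) by auto
  qed
  have Psub: "p dvd t" if t: "t \<in> P" for t
  proof -
    define rr where "rr = pseudo_mod t p"
    obtain \<alpha> q where aq: "\<alpha> \<noteq> 0" "smult \<alpha> t = p * q + rr"
      using pseudo_mod(1)[OF pne, of t] rr_def by blast
    have rdeg: "rr = 0 \<or> degree rr < degree p" using pseudo_mod(2)[OF pne, of t] rr_def by blast
    have e: "[:\<alpha>:] * t = smult \<alpha> t" by simp
    have "[:\<alpha>:] * t \<in> P" by (rule ideal_mult[OF PI t])
    then have "smult \<alpha> t \<in> P" unfolding e .
    moreover have "p * q \<in> P" by (rule ideal_mult2[OF PI p(3)])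
    ultimately have "smult \<alpha> t - p * q \<in> P" using ideal_diff[OF PI] by blast
    then have rP: "rr \<in> P" using aq(2) by (simp add: algebra_simps)
    have "rr = 0"
    proof (rule ccontr)
      assume rr0: "rr \<noteq> 0"
      then have "d \<le> degree rr" using dmin rP by simp
      then show False using rdeg rr0 dp by simp
    qed
    then have "p dvd [:\<alpha>:] * t" using aq(2) e by simp
    moreover have "\<not> p dvd [:\<alpha>:]"
    proof
      assume "p dvd [:\<alpha>:]"
      then have "degree p \<le> 0" using aq(1) dvd_imp_degree_le[of p "[:\<alpha>:]"] by simp
      then show False using dpos by simp
    qed
    ultimately show ?thesis using prime_dvd_multD[OF p(1), of "[:\<alpha>:]" t] by blast
  qed
  have Pprin: "P = principal p"
  proof
    show "P \<subseteq> principal p" using Psub by (auto simp: principal_eq)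
    show "principal p \<subseteq> P" using ideal_dvd[OF PI p(3)] by (auto simp: principal_eq)
  qed
  have hyp1: "p dvd map_poly (map_poly pderiv) a * pderiv p - pderiv a * map_poly (map_poly pderiv) p"
  proof -
    have "pbr a varY p \<in> P" using PB p(3) .
    then have "dX a * dZ p - dZ a * dX p \<in> P" by (simp add: pbr_varY)
    then show ?thesis using Psub by (simp add: dX_def dZ_def)
  qed
  have hyp2: "p dvd map_poly pderiv a * pderiv p - pderiv a * map_poly pderiv p"
  proof -
    have "pbr a varX p \<in> P" using PB p(3) .
    then have "dZ a * dY p - dY a * dZ p \<in> P" by (simp add: pbr_varX)
    then have "p dvd dZ a * dY p - dY a * dZ p" using Psub by blast
    moreover have "map_poly pderiv a * pderiv p - pderiv a * map_poly pderiv p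
        = - (dZ a * dY p - dY a * dZ p)" by (simp add: dY_def dZ_def algebra_simps)
    ultimately show ?thesis by (simp only: dvd_minus_iff)
  qed
  have "\<exists>\<mu>. p dvd a - [:[:[:\<mu>:]:]:]"
  proof (rule const_lemma[where Ds = "[map_poly pderiv, pderiv]" and m = m3 and emb = "\<lambda>k. [:[:k:]:]"])
    show "is_der D" if "D \<in> set [map_poly pderiv, pderiv]" for D :: "complex poly poly \<Rightarrow> complex poly poly"
      using that is_der_pderiv is_der_map_poly[OF is_der_pderiv] by auto
    show "(\<forall>D\<in>set [map_poly pderiv, pderiv]. D c = 0)
       \<or> (\<exists>D\<in>set [map_poly pderiv, pderiv]. D c \<noteq> 0 \<and> m3 (D c) < m3 c)" for c :: "complex poly poly"
      by (rule meas3)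
    show "c \<in> range (\<lambda>k. [:[:k:]:])" if "\<forall>D\<in>set [map_poly pderiv, pderiv]. D c = 0" for c :: "complex poly poly"
      by (rule ker3[OF that])
    show "[:[:x + y:]:] = [:[:x:]:] + [:[:y:]:]" for x y :: complex by simp
    show "[:[:x * y:]:] = [:[:x:]:] * [:[:y:]:]" for x y :: complex by simp
    show "[:[:1::complex:]:] = 1" by (simp only: one_pCons[symmetric])
    show "x = 0" if "[:[:x:]:] = 0" for x :: complex using that by simp
    show "p dvd u \<or> p dvd v" if "p dvd u * v" for u v using prime_dvd_multD[OF p(1) that] .
    show "degree p > 0" by (rule dpos)
    show "p dvd map_poly D a * pderiv p - pderiv a * map_poly D p" if "D \<in> set [map_poly pderiv, pderiv]" for D
      using that hyp1 hyp2 by auto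
  qed
  then obtain \<mu> where "p dvd a - [:[:[:\<mu>:]:]:]" by blast
  then have "p dvd a - cst \<mu>" by (simp add: cst_def)
  moreover have "irreducible p"
  proof (rule prime_of_principal[OF _ Pprin])
    show "is_prime_ideal P" using PI PU PP by (simp add: is_prime_ideal_def)
    show "p \<noteq> 0" by (rule pne)
  qed
  ultimately show ?thesis using Pprin by blast
qed



theorem corollary3p9:
  fixes a :: A3 and P :: "A3 set"
  assumes "a \<notin> range cst"
  shows "poisson_prime a P \<longleftrightarrow>
           P = {0}
         \<or> (poisson_prime a P \<and> residually_null a P)
         \<or> (\<exists>p \<mu>. irreducible p \<and> p dvd (a - cst \<mu>) \<and> P = principal p)"
proof
  assume pp: "poisson_prime a P"
  have PI: "is_ideal P" and PU: "P \<noteq> UNIV" and PP: "\<And>u v. u*v \<in> P \<Longrightarrow> u \<in> P \<or> v \<in> P"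
    and PB: "\<And>b u. u \<in> P \<Longrightarrow> pbr a b u \<in> P"
    using pp by (auto simp: poisson_prime_def is_prime_ideal_def)
  show "P = {0} \<or> (poisson_prime a P \<and> residually_null a P)
         \<or> (\<exists>p \<mu>. irreducible p \<and> p dvd (a - cst \<mu>) \<and> P = principal p)"
  proof (cases "P = {0}")
    case True then show ?thesis by simp
  next
    case P0: False
    show ?thesis
    proof (cases "residually_null a P")
      case True then show ?thesis using pp by simp
    next
      case rn: False
      have notN: "\<not> (dX a \<in> P \<and> dY a \<in> P \<and> dZ a \<in> P)"
      proof
        assume N: "dX a \<in> P \<and> dY a \<in> P \<and> dZ a \<in> P"
        have "pbr a f g \<in> P" for f g
        proof -
          have "(dX f * dY g - dY f * dX g) * dZ a \<in> P" using ideal_mult[OF PI] N by blast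
          moreover have "(dY f * dZ g - dZ f * dY g) * dX a \<in> P" using ideal_mult[OF PI] N by blast
          moreover have "(dZ f * dX g - dX f * dZ g) * dY a \<in> P" using ideal_mult[OF PI] N by blast
          ultimately show ?thesis unfolding pbr_def using ideal_add[OF PI] by blast
        qed
        then have "residually_null a P"
          using PI PB by (simp add: residually_null_def poisson_ideal_def)
        then show False using rn by simp
      qed
      have "\<exists>p \<mu>. irreducible p \<and> p dvd a - cst \<mu> \<and> P = principal p"
      proof (cases "\<exists>f. f \<noteq> 0 \<and> [:[:f:]:] \<in> P")
        case True
        then obtain f where "f \<noteq> 0" "[:[:f:]:] \<in> P" by blast
        then show ?thesis using case3[OF PI PU PP PB notN] by blast
      next
        case n3: False
        have notIII: "[:[:f:]:] \<notin> P" if "f \<noteq> 0" for f using n3 that by blast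
        show ?thesis
        proof (cases "\<exists>r. r \<noteq> 0 \<and> [:r:] \<in> P")
          case True
          then obtain r where "r \<noteq> 0" "[:r:] \<in> P" by blast
          then show ?thesis using case2[OF PI PU PP PB notN notIII] by blast
        next
          case n2: False
          have notII: "[:r:] \<notin> P" if "r \<noteq> 0" for r using n2 that by blast
          have "0 \<in> P" by (rule ideal_0[OF PI])
          then obtain w where "w \<in> P" "w \<noteq> 0" using P0 by blast
          then show ?thesis using case1[OF PI PU PP PB notII] by blast
        qed
      qed
      then show ?thesis by blast
    qed
  qed
next
  assume "P = {0} \<or> (poisson_prime a P \<and> residually_null a P)
         \<or> (\<exists>p \<mu>. irreducible p \<and> p dvd (a - cst \<mu>) \<and> P = principal p)"
  then show "poisson_prime a P"
    using zero_poisson_prime rev_dir[OF assms] by blast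
qed


end
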